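(* For any two $X$-trees $T_1$ and $T_2$, one has $\mathbb{M}(T_1)=\mathbb{M}(T_2)$ if and only if $T_1\simeq T_2$.
   Context: Let $X$ be a finite set with $|X|=n\ge 3$. An $X$-tree is a finite tree $T=(V,E)$ whose set of degree-1 vertices is exactly $X$ and which has no vertices of degree $2$; $T_1\simeq T_2$ means there is a graph isomorphism $T_1\to T_2$ fixing every element of $X$. A cord is a $2$-subset $xy$ of $X$. For each cord $xy$, $\lambda^T_{xy}:\mathbb{R}^E\to\mathbb{R}$, $\omega\mapsto\sum_{e\in E(x|y)}\omega(e)$ where $E(x|y)$ is the edge set of the path from $x$ to $y$. $\mathbb{M}(T)$ is the matroid on ground set $\binom{X}{2}$ represented over $\mathbb{R}$ by $xy\mapsto\lambda^T_{xy}$ (i.e. a set of cords is independent iff the corresponding forms are linearly independent). Equality of matroids means equality of their collections of independent sets on the common ground set $\binom{X}{2}$. *)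

theory Defs
  imports Complex_Main
begin

definition is_graph :: "'v set \<Rightarrow> 'v set set \<Rightarrow> bool" where
  "is_graph V E \<longleftrightarrow> finite V \<and> (\<forall>e\<in>E. e \<subseteq> V \<and> card e = 2)"

definition degree :: "'v set set \<Rightarrow> 'v \<Rightarrow> nat" where
  "degree E v = card {e\<in>E. v \<in> e}"

definition is_path :: "'v set \<Rightarrow> 'v set set \<Rightarrow> 'v list \<Rightarrow> bool" where
  "is_path V E p \<longleftrightarrow> p \<noteq> [] \<and> distinct p \<and> set p \<subseteq> V \<and>
     (\<forall>i. Suc i < length p \<longrightarrow> {p ! i, p ! Suc i} \<in> E)"

definition path_edges :: "'v list \<Rightarrow> 'v set set" where
  "path_edges p = {{p ! i, p ! Suc i} | i. Suc i < length p}"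

definition is_tree :: "'v set \<Rightarrow> 'v set set \<Rightarrow> bool" where
  "is_tree V E \<longleftrightarrow> is_graph V E \<and> V \<noteq> {} \<and>
     (\<forall>u\<in>V. \<forall>v\<in>V. \<exists>!p. is_path V E p \<and> hd p = u \<and> last p = v)"

definition is_X_tree :: "'v set \<Rightarrow> 'v set \<Rightarrow> 'v set set \<Rightarrow> bool" where
  "is_X_tree X V E \<longleftrightarrow> is_tree V E \<and> X \<subseteq> V \<and> {v\<in>V. degree E v = 1} = X \<and>
     (\<forall>v\<in>V. degree E v \<noteq> 2)"

definition X_iso :: "'v set \<Rightarrow> 'v set \<Rightarrow> 'v set set \<Rightarrow> 'v set \<Rightarrow> 'v set set \<Rightarrow> bool" where
  "X_iso X V1 E1 V2 E2 \<longleftrightarrow> (\<exists>f. bij_betw f V1 V2 \<and>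
     (\<forall>u\<in>V1. \<forall>v\<in>V1. {u, v} \<in> E1 \<longleftrightarrow> {f u, f v} \<in> E2) \<and> (\<forall>x\<in>X. f x = x))"

definition cords :: "'v set \<Rightarrow> 'v set set" where
  "cords X = {{x, y} | x y. x \<in> X \<and> y \<in> X \<and> x \<noteq> y}"

definition cord_edges :: "'v set \<Rightarrow> 'v set set \<Rightarrow> 'v set \<Rightarrow> 'v set set" where
  "cord_edges V E c = \<Union>{path_edges p | p. is_path V E p \<and> {hd p, last p} = c}"

text \<open>The linear form lambda_c on R^E (weights outside E are irrelevant).\<close>
definition lam :: "'v set \<Rightarrow> 'v set set \<Rightarrow> 'v set \<Rightarrow> ('v set \<Rightarrow> real) \<Rightarrow> real" where
  "lam V E c \<omega> = (\<Sum>e\<in>cord_edges V E c. \<omega> e)"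

definition lin_indep_cords :: "'v set \<Rightarrow> 'v set set \<Rightarrow> 'v set set \<Rightarrow> bool" where
  "lin_indep_cords V E S \<longleftrightarrow> finite S \<and>
     (\<forall>a :: 'v set \<Rightarrow> real. (\<forall>\<omega>. (\<Sum>c\<in>S. a c * lam V E c \<omega>) = 0) \<longrightarrow> (\<forall>c\<in>S. a c = 0))"

definition M_indep :: "'v set \<Rightarrow> 'v set \<Rightarrow> 'v set set \<Rightarrow> 'v set set set" where
  "M_indep X V E = {S. S \<subseteq> cords X \<and> lin_indep_cords V E S}"

end

theory Submission imports Defs begin

lemma is_path_succ: "is_path V E p \<longleftrightarrow> p \<noteq> [] \<and> distinct p \<and> set p \<subseteq> V \<and> successively (\<lambda>x y. {x,y} \<in> E) p"
  unfolding is_path_def successively_conv_nth by simp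

definition phi :: "('v \<Rightarrow> 'v \<Rightarrow> 'v \<Rightarrow> 'v \<Rightarrow> bool) \<Rightarrow> 'v \<Rightarrow> 'v \<Rightarrow> 'v \<Rightarrow> 'v \<Rightarrow> 'v \<Rightarrow> bool" where
  "phi D x y z a b \<longleftrightarrow> (\<exists>p q. p \<in> {x,y,z} \<and> q \<in> {x,y,z} \<and> p \<noteq> q \<and> distinct [a,b,p,q] \<and>
      D a b p q \<and> \<not> D a p b q)"

locale xtree =
  fixes X V :: "'v set" and E :: "'v set set"
  assumes xt: "is_X_tree X V E" and finX: "finite X" and cardX: "card X \<ge> 3"
begin

lemma finV: "finite V" using xt unfolding is_X_tree_def is_tree_def is_graph_def by auto
lemma edge: "e \<in> E \<Longrightarrow> e \<subseteq> V \<and> card e = 2" using xt unfolding is_X_tree_def is_tree_def is_graph_def by auto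
lemma XV: "X \<subseteq> V" using xt unfolding is_X_tree_def by auto
lemma leaves: "{v\<in>V. degree E v = 1} = X" using xt unfolding is_X_tree_def by auto
lemma nodeg2: "v \<in> V \<Longrightarrow> degree E v \<noteq> 2" using xt unfolding is_X_tree_def by auto
lemma uniq: "u \<in> V \<Longrightarrow> v \<in> V \<Longrightarrow> \<exists>!p. is_path V E p \<and> hd p = u \<and> last p = v"
  using xt unfolding is_X_tree_def is_tree_def by auto
lemma finE: "finite E"
proof -
  have "E \<subseteq> Pow V" using edge by auto
  thus ?thesis using finV finite_subset by blast
qed

lemma edge2: "e \<in> E \<Longrightarrow> \<exists>s t. e = {s,t} \<and> s \<noteq> t \<and> s \<in> V \<and> t \<in> V"
proof -
  assume e: "e \<in> E"
  then have "card e = 2" "e \<subseteq> V" using edge by auto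
  then obtain s t where "e = {s,t}" "s \<noteq> t" by (meson card_2_iff)
  thus ?thesis using \<open>e \<subseteq> V\<close> by auto
qed

lemma edge_ne: "{u,v} \<in> E \<Longrightarrow> u \<noteq> v"
  using edge[of "{u,v}"] by fastforce

lemma edgeV: "{u,v} \<in> E \<Longrightarrow> u \<in> V \<and> v \<in> V"
  using edge[of "{u,v}"] by auto

definition P :: "'v \<Rightarrow> 'v \<Rightarrow> 'v list" where
  "P u v = (THE p. is_path V E p \<and> hd p = u \<and> last p = v)"

definition S :: "'v \<Rightarrow> 'v \<Rightarrow> 'v set" where
  "S u v = set (P u v)"

lemma P: assumes "u \<in> V" "v \<in> V"
  shows "is_path V E (P u v)" "hd (P u v) = u" "last (P u v) = v"
  using theI'[OF uniq[OF assms]] unfolding P_def by auto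

lemma P_eq: assumes "is_path V E p" shows "P (hd p) (last p) = p"
proof -
  have ne: "p \<noteq> []" "set p \<subseteq> V" using assms unfolding is_path_def by auto
  hence "hd p \<in> V" "last p \<in> V" by auto
  from uniq[OF this] P[OF this] assms show ?thesis by blast
qed

lemma P_eqI: assumes "is_path V E p" "hd p = u" "last p = v" shows "P u v = p"
  using P_eq assms by blast

lemma S_sub: "u \<in> V \<Longrightarrow> v \<in> V \<Longrightarrow> S u v \<subseteq> V"
  using P unfolding S_def is_path_def by auto

lemma S_ends: assumes "u \<in> V" "v \<in> V" shows "u \<in> S u v \<and> v \<in> S u v"
proof -
  have ne: "P u v \<noteq> []" using P(1)[OF assms] unfolding is_path_def by simp
  have "hd (P u v) \<in> set (P u v)" "last (P u v) \<in> set (P u v)"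
    using hd_in_set[OF ne] last_in_set[OF ne] by auto
  thus ?thesis using P(2,3)[OF assms] unfolding S_def by simp
qed

lemma P_refl: assumes "u \<in> V" shows "P u u = [u]"
proof (rule P_eqI)
  show "is_path V E [u]" using assms unfolding is_path_def by simp
qed simp_all

lemma S_refl: assumes "u \<in> V" shows "S u u = {u}"
  unfolding S_def P_refl[OF assms] by simp

lemma path_rev: assumes "is_path V E p" shows "is_path V E (rev p)"
proof -
  have eq: "(\<lambda>x y. {y,x} \<in> E) = (\<lambda>x y. {x,y} \<in> E)" by (intro ext) (simp add: insert_commute)
  show ?thesis using assms unfolding is_path_succ successively_rev eq by simp
qed

lemma P_rev: assumes "u \<in> V" "v \<in> V" shows "P v u = rev (P u v)"
proof (rule P_eqI)
  show "is_path V E (rev (P u v))" using path_rev P(1)[OF assms] by blast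
  have ne: "P u v \<noteq> []" using P(1)[OF assms] unfolding is_path_def by simp
  show "hd (rev (P u v)) = v" using P(3)[OF assms] ne by (simp add: hd_rev)
  show "last (rev (P u v)) = u" using P(2)[OF assms] ne by (simp add: last_rev)
qed

lemma S_sym: assumes "u \<in> V" "v \<in> V" shows "S v u = S u v"
  unfolding S_def P_rev[OF assms] by simp

lemma P_edge: "{u,v} \<in> E \<Longrightarrow> P u v = [u,v]"
  using edge_ne edgeV by (intro P_eqI) (auto simp: is_path_def nth_Cons split: nat.splits)

lemma S_edge: "{u,v} \<in> E \<Longrightarrow> S u v = {u,v}"
  using P_edge S_def by simp

lemma path_take: assumes "is_path V E p" "k < length p" shows "is_path V E (take (Suc k) p)"
proof -
  have "successively (\<lambda>x y. {x,y} \<in> E) (take (Suc k) p @ drop (Suc k) p)"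
    using assms(1) unfolding is_path_succ by simp
  hence "successively (\<lambda>x y. {x,y} \<in> E) (take (Suc k) p)"
    unfolding successively_append_iff by blast
  moreover have "take (Suc k) p \<noteq> []" using assms(2) by (cases p) auto
  moreover have "set (take (Suc k) p) \<subseteq> V" using assms(1) set_take_subset unfolding is_path_def by fast
  ultimately show ?thesis using assms(1) unfolding is_path_succ by simp
qed

lemma path_drop: assumes "is_path V E p" "k < length p" shows "is_path V E (drop k p)"
proof -
  have "successively (\<lambda>x y. {x,y} \<in> E) (take k p @ drop k p)"
    using assms(1) unfolding is_path_succ by simp
  hence "successively (\<lambda>x y. {x,y} \<in> E) (drop k p)"
    unfolding successively_append_iff by blast
  moreover have "drop k p \<noteq> []" using assms(2) by simp
  moreover have "set (drop k p) \<subseteq> V" using assms(1) set_drop_subset unfolding is_path_def by fast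
  ultimately show ?thesis using assms(1) unfolding is_path_succ by simp
qed

lemma S_split: assumes "u \<in> V" "v \<in> V" "w \<in> S u v"
  shows "S u v = S u w \<union> S w v" "S u w \<inter> S w v = {w}"
proof -
  define p where "p = P u v"
  have pp: "is_path V E p" "hd p = u" "last p = v" using P[OF assms(1,2)] p_def by auto
  obtain k where k: "k < length p" "p ! k = w" using assms(3) unfolding S_def p_def[symmetric]
    by (meson in_set_conv_nth)
  have w: "w \<in> V" using assms(3) S_sub assms by blast
  have t: "P u w = take (Suc k) p"
    apply (rule P_eqI)
      apply (rule path_take[OF pp(1) k(1)])
    using pp(2) k apply (simp add: hd_take)
    using k by (simp add: take_Suc_conv_app_nth)
  have d: "P w v = drop k p"
    apply (rule P_eqI)
    using path_drop[OF pp(1) k(1)] pp(3) k by (auto simp: hd_drop_conv_nth)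
  have st: "set (take (Suc k) p) = set (take k p) \<union> {w}" using k by (simp add: take_Suc_conv_app_nth)
  have sd: "w \<in> set (drop k p)" using k by (metis hd_drop_conv_nth hd_in_set drop_eq_Nil not_le)
  have dis: "set (take k p) \<inter> set (drop k p) = {}"
    using pp(1) unfolding is_path_def by (metis append_take_drop_id distinct_append)
  have all: "set p = set (take k p) \<union> set (drop k p)" by (metis append_take_drop_id set_append)
  show "S u v = S u w \<union> S w v" unfolding S_def t d p_def[symmetric] using all st sd by auto
  show "S u w \<inter> S w v = {w}" unfolding S_def t d using st sd dis by auto
qed

lemma S_sub_split: assumes "u \<in> V" "v \<in> V" "w \<in> S u v" shows "S u w \<subseteq> S u v" "S w v \<subseteq> S u v"
  using S_split[OF assms] by auto

lemma second: assumes "u \<in> V" "v \<in> V" "u \<noteq> v"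
  shows "\<exists>n. {u,n} \<in> E \<and> n \<in> S u v \<and> n \<noteq> u"
proof -
  define p where "p = P u v"
  have pp: "is_path V E p" "hd p = u" "last p = v" using P[OF assms(1,2)] p_def by auto
  have l: "1 < length p"
  proof (rule ccontr)
    assume "\<not> 1 < length p"
    moreover have "p \<noteq> []" using pp unfolding is_path_def by auto
    ultimately have "length p = 1" by (cases p) auto
    then obtain x where "p = [x]" by (metis One_nat_def length_0_conv length_Suc_conv)
    thus False using pp assms(3) by auto
  qed
  have "{p!0, p!1} \<in> E" using pp(1) l unfolding is_path_def by auto
  moreover have "p ! 0 = u" using pp(2) l by (metis hd_conv_nth length_greater_0_conv less_trans zero_less_one)
  moreover have "p ! 1 \<noteq> p ! 0" using pp(1) l unfolding is_path_def by (simp add: nth_eq_iff_index_eq)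
  moreover have "p ! 1 \<in> S u v" using l unfolding S_def p_def[symmetric] by simp
  ultimately show ?thesis by auto
qed

lemma path_app: assumes "is_path V E p1" "is_path V E p2" "{last p1, hd p2} \<in> E"
  "set p1 \<inter> set p2 = {}" shows "is_path V E (p1 @ p2)"
  using assms unfolding is_path_succ successively_append_iff by auto

lemma median: assumes "a \<in> V" "b \<in> V" "c \<in> V"
  shows "\<exists>m. m \<in> S a b \<and> m \<in> S b c \<and> m \<in> S a c"
proof -
  define q where "q = P c a"
  have qq: "is_path V E q" "hd q = c" "last q = a" using P[OF assms(3,1)] q_def by auto
  have qne: "q \<noteq> []" using qq unfolding is_path_def by auto
  define K where "K = {k. k < length q \<and> q ! k \<in> S a b}"
  have "length q - 1 \<in> K" unfolding K_def using qne qq(3) S_ends[OF assms(1,2)]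
    by (simp add: last_conv_nth)
  define k where "k = (LEAST k. k \<in> K)"
  have kK: "k \<in> K" unfolding k_def by (rule LeastI) fact
  have kmin: "\<And>j. j \<in> K \<Longrightarrow> k \<le> j" unfolding k_def by (rule Least_le)
  define w where "w = q ! k"
  have k: "k < length q" "w \<in> S a b" using kK unfolding K_def w_def by auto
  have wV: "w \<in> V" using k(2) S_sub assms by blast
  have wca: "w \<in> S c a" unfolding S_def q_def[symmetric] w_def using k by simp
  show ?thesis
  proof (cases "k = 0")
    case True
    hence "w = c" using qq(2) qne w_def by (simp add: hd_conv_nth)
    thus ?thesis using k(2) S_ends[OF assms(2,3)] S_ends[OF assms(1,3)] by blast
  next
    case False
    define p1 where "p1 = take k q"
    define p2 where "p2 = P w b"
    have p1: "is_path V E p1" unfolding p1_def using path_take[OF qq(1), of "k - 1"] k False by simp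
    have p2: "is_path V E p2" "hd p2 = w" "last p2 = b" using P[OF wV assms(2)] p2_def by auto
    have "Suc (k-1) < length q" using k False by simp
    hence "{q ! (k-1), q ! Suc (k-1)} \<in> E" using qq(1) unfolding is_path_def by blast
    moreover have "last p1 = q ! (k-1)"
    proof -
      have "take (Suc (k-1)) q = take (k-1) q @ [q!(k-1)]" using k by (intro take_Suc_conv_app_nth) simp
      thus ?thesis unfolding p1_def using False by simp
    qed
    ultimately have e: "{last p1, hd p2} \<in> E" using p2(2) False w_def by simp
    have "set p2 \<subseteq> S a b" using S_sub_split(2)[OF assms(1,2) k(2)] p2_def S_def by simp
    moreover have "set p1 \<inter> S a b = {}"
    proof -
      { fix x assume "x \<in> set p1" "x \<in> S a b"
        then obtain j where "j < k" "q ! j = x" unfolding p1_def using k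
          by (auto simp: in_set_conv_nth)
        hence "j \<in> K" using \<open>x \<in> S a b\<close> k unfolding K_def by auto
        hence False using kmin \<open>j < k\<close> by fastforce }
      thus ?thesis by blast
    qed
    ultimately have dis: "set p1 \<inter> set p2 = {}" by blast
    have pa: "is_path V E (p1 @ p2)" using path_app[OF p1 p2(1) e dis] .
    have "hd (p1 @ p2) = c" using qq(2) False unfolding p1_def using qne by (simp add: hd_take)
    moreover have "last (p1 @ p2) = b" using p2 by (metis last_appendR is_path_def)
    ultimately have "P c b = p1 @ p2" using P_eqI[OF pa] by simp
    moreover have "p2 \<noteq> []" using p2(1) unfolding is_path_def by simp
    ultimately have "w \<in> S c b" unfolding S_def using p2(2) hd_in_set by fastforce
    thus ?thesis using k(2) wca S_sym[OF assms(3,2)] S_sym[OF assms(3,1)] by auto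
  qed
qed

lemma S_trans: assumes "a \<in> V" "b \<in> V" "c \<in> V" shows "S a c \<subseteq> S a b \<union> S b c"
proof -
  obtain m where m: "m \<in> S a b" "m \<in> S b c" "m \<in> S a c" using median[OF assms] by blast
  have mV: "m \<in> V" using m S_sub assms by blast
  have "S a c = S a m \<union> S m c" using S_split[OF assms(1,3) m(3)] by simp
  moreover have "S a m \<subseteq> S a b" using S_sub_split[OF assms(1,2) m(1)] by simp
  moreover have "S m c \<subseteq> S b c" using S_sub_split[OF assms(2,3) m(2)] by simp
  ultimately show ?thesis by blast
qed

definition N :: "'v \<Rightarrow> 'v set" where "N v = {n. {v,n} \<in> E}"

lemma N_sub: "N v \<subseteq> V" unfolding N_def using edgeV by auto
lemma finN: "finite (N v)" using N_sub finV finite_subset by blast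

lemma deg_N: "degree E v = card (N v)"
proof -
  have "bij_betw (\<lambda>n. {v,n}) (N v) {e\<in>E. v \<in> e}"
  proof (rule bij_betwI')
    fix x y assume "x \<in> N v" "y \<in> N v"
    hence "x \<noteq> v" "y \<noteq> v" unfolding N_def using edge_ne by auto
    thus "({v, x} = {v, y}) = (x = y)" by (auto simp: doubleton_eq_iff)
  next
    fix x assume "x \<in> N v" thus "{v,x} \<in> {e\<in>E. v \<in> e}" unfolding N_def by auto
  next
    fix e assume "e \<in> {e\<in>E. v \<in> e}"
    then obtain s t where "e = {s,t}" "v \<in> e" "e \<in> E" using edge2 by blast
    thus "\<exists>x\<in>N v. e = {v, x}" unfolding N_def by (auto simp: insert_commute)
  qed
  thus ?thesis unfolding degree_def by (simp add: bij_betw_same_card)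
qed

lemma N_sym: "n \<in> N v \<longleftrightarrow> v \<in> N n" unfolding N_def by (simp add: insert_commute)

lemma leaf_deg: "x \<in> X \<Longrightarrow> card (N x) = 1" using leaves deg_N by auto

lemma leaf_interior: assumes "x \<in> X" "a \<in> V" "b \<in> V" "x \<in> S a b" shows "x = a \<or> x = b"
proof (rule ccontr)
  assume "\<not> (x = a \<or> x = b)"
  hence ne: "x \<noteq> a" "x \<noteq> b" by auto
  have xV: "x \<in> V" using assms XV by auto
  obtain n1 where n1: "{x,n1} \<in> E" "n1 \<in> S x a" "n1 \<noteq> x" using second[OF xV assms(2) ne(1)] by blast
  obtain n2 where n2: "{x,n2} \<in> E" "n2 \<in> S x b" "n2 \<noteq> x" using second[OF xV assms(3) ne(2)] by blast
  have "S a x \<inter> S x b = {x}" using S_split(2)[OF assms(2,3,4)] .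
  hence "n1 \<noteq> n2" using n1 n2 S_sym[OF xV assms(2)] by auto
  hence "{n1,n2} \<subseteq> N x" "card {n1,n2} = 2" using n1 n2 unfolding N_def by auto
  hence "2 \<le> card (N x)" using finN by (metis card_mono)
  thus False using leaf_deg assms(1) by simp
qed

lemma leaf_nbr: assumes "x \<in> X" shows "\<exists>n. N x = {n}"
  using leaf_deg[OF assms] by (simp add: card_1_singleton_iff)

lemma exists_other: "\<exists>y \<in> X. y \<noteq> v"
proof -
  have "card X \<ge> 2" using cardX by simp
  then obtain a b where "a \<in> X" "b \<in> X" "a \<noteq> b"
    by (metis One_nat_def Suc_1 Suc_le_eq card_le_Suc0_iff_eq finX not_less_eq_eq)
  thus ?thesis by metis
qed

lemma internal_deg: assumes "v \<in> V" "v \<notin> X" shows "card (N v) \<ge> 3"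
proof -
  have "card (N v) \<noteq> 1" using leaves assms deg_N by auto
  moreover have "card (N v) \<noteq> 2" using nodeg2[OF assms(1)] deg_N by simp
  moreover have "card (N v) \<noteq> 0"
  proof -
    obtain y where "y \<in> X" "y \<noteq> v" using exists_other by blast
    then obtain n where "{v,n} \<in> E" using second[OF assms(1), of y] XV by (metis subsetD)
    hence "n \<in> N v" unfolding N_def by simp
    thus ?thesis using finN by auto
  qed
  ultimately show ?thesis by linarith
qed

lemma three_nbrs: assumes "v \<in> V" "v \<notin> X"
  shows "\<exists>n1 n2 n3. n1 \<in> N v \<and> n2 \<in> N v \<and> n3 \<in> N v \<and> n1 \<noteq> n2 \<and> n1 \<noteq> n3 \<and> n2 \<noteq> n3"
proof -
  have c: "card (N v) \<ge> 3" using internal_deg[OF assms] .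
  then obtain n1 where n1: "n1 \<in> N v" by (metis all_not_in_conv card.empty not_numeral_le_zero)
  have c2: "card (N v - {n1}) \<ge> 2" using c n1 finN by (simp add: card_Diff_singleton)
  then obtain n2 where n2: "n2 \<in> N v - {n1}" by (metis all_not_in_conv card.empty not_numeral_le_zero)
  have c3: "card (N v - {n1} - {n2}) \<ge> 1" using c2 n2 finN by (simp add: card_Diff_singleton)
  then obtain n3 where n3: "n3 \<in> N v - {n1} - {n2}" by (metis all_not_in_conv card.empty not_one_le_zero)
  show ?thesis using n1 n2 n3 by blast
qed

lemma N_V: "n \<in> N v \<Longrightarrow> n \<in> V \<and> v \<in> V \<and> n \<noteq> v"
  unfolding N_def using edgeV edge_ne by auto

lemma S_N: "n \<in> N v \<Longrightarrow> S v n = {v,n}" unfolding N_def using S_edge by auto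

lemma branch_leaf: assumes "n \<in> N u" shows "\<exists>a\<in>X. u \<notin> S a n"
proof -
  have nV: "n \<in> V" "u \<in> V" "n \<noteq> u" using N_V[OF assms] by auto
  define B where "B = {t\<in>V. u \<notin> S n t}"
  have nB: "n \<in> B" unfolding B_def using nV S_refl by auto
  have finB: "finite B" unfolding B_def using finV by auto
  define M where "M = Max ((\<lambda>s. card (S u s)) ` B)"
  have "M \<in> (\<lambda>s. card (S u s)) ` B" unfolding M_def using finB nB by (intro Max_in) auto
  then obtain t where tB: "t \<in> B" and tM: "card (S u t) = M" by auto
  have tmax: "card (S u s) \<le> card (S u t)" if "s \<in> B" for s
    unfolding tM M_def using finB that by (intro Max_ge) auto
  have tV: "t \<in> V" and ut: "u \<notin> S n t" using tB unfolding B_def by auto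
  have tu: "t \<noteq> u" using ut S_ends[OF nV(1) tV] by auto
  have A: "s \<in> S u t" if s: "s \<in> N t" for s
  proof (rule ccontr)
    assume sn: "s \<notin> S u t"
    have sV: "s \<in> V" using N_V[OF s] by auto
    obtain m where m: "m \<in> S u t" "m \<in> S t s" "m \<in> S u s" using median[OF nV(2) tV sV] by blast
    have "m = t" using m(1,2) sn S_N[OF s] by auto
    hence "S u s = S u t \<union> S t s" using S_split(1)[OF nV(2) sV] m(3) by auto
    hence sup: "S u s = S u t \<union> {t,s}" using S_N[OF s] by simp
    have fin: "finite (S u t)" using finV S_sub[OF nV(2) tV] finite_subset by blast
    have "t \<in> S u t" using S_ends[OF nV(2) tV] by blast
    hence "S u s = insert s (S u t)" unfolding sup by blast
    hence "card (S u s) = Suc (card (S u t))" using card_insert_disjoint[OF fin sn] by simp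
    hence "card (S u t) < card (S u s)" by simp
    moreover have "s \<in> B"
    proof -
      have "S n s \<subseteq> S n t \<union> S t s" using S_trans[OF nV(1) tV sV] .
      moreover have "u \<noteq> s" using sn S_ends[OF nV(2) tV] by auto
      ultimately have "u \<notin> S n s" using ut tu S_N[OF s] by auto
      thus ?thesis unfolding B_def using sV by auto
    qed
    ultimately show False using tmax by fastforce
  qed
  have Bu: "s1 = s2" if s1: "s1 \<in> N t" and s2: "s2 \<in> N t" for s1 s2
  proof (rule ccontr)
    assume d: "s1 \<noteq> s2"
    have V1: "s1 \<in> V" "s1 \<noteq> t" using N_V[OF s1] by auto
    have V2: "s2 \<in> V" "s2 \<noteq> t" using N_V[OF s2] by auto
    have i1: "S u t = S u s1 \<union> S s1 t" "S u s1 \<inter> S s1 t = {s1}" using S_split[OF nV(2) tV A[OF s1]] by auto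
    have i2: "S u t = S u s2 \<union> S s2 t" "S u s2 \<inter> S s2 t = {s2}" using S_split[OF nV(2) tV A[OF s2]] by auto
    have e1: "S s1 t = {s1,t}" using S_N[OF s1] S_sym[OF tV V1(1)] by (simp add: insert_commute)
    have e2: "S s2 t = {s2,t}" using S_N[OF s2] S_sym[OF tV V2(1)] by (simp add: insert_commute)
    have "s2 \<in> S u s1" using i1 e1 A[OF s2] d V2 by auto
    have "s1 \<in> S u s2" using i2 e2 A[OF s1] d V1 by auto
    have "S u s1 = S u s2 \<union> S s2 s1" "S u s2 \<inter> S s2 s1 = {s2}"
      using S_split[OF nV(2) V1(1) \<open>s2 \<in> S u s1\<close>] by auto
    moreover have "s1 \<in> S s2 s1" using S_ends V1 V2 by auto
    ultimately show False using \<open>s1 \<in> S u s2\<close> d by auto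
  qed
  obtain p where "{t,p} \<in> E" using second[OF tV nV(2) tu] by blast
  hence pN: "p \<in> N t" unfolding N_def by simp
  hence "N t = {p}" using Bu by blast
  hence "degree E t = 1" using deg_N by simp
  hence "t \<in> X" using leaves tV by auto
  moreover have "u \<notin> S t n" using ut S_sym[OF nV(1) tV] by simp
  ultimately show ?thesis by blast
qed

lemma nbr_sep: assumes "n \<in> N u" "n' \<in> N u" "n \<noteq> n'" shows "u \<in> S n n'"
proof -
  have V: "n \<in> V" "n' \<in> V" "u \<in> V" using N_V assms by auto
  obtain m where m: "m \<in> S n n'" "m \<in> S n' u" "m \<in> S n u" using median[OF V] by blast
  have "S n u = {u,n}" using S_N[OF assms(1)] S_sym[OF V(3) V(1)] by simp
  moreover have "S n' u = {u,n'}" using S_N[OF assms(2)] S_sym[OF V(3) V(2)] by simp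
  ultimately have "m = u" using m assms(3) by auto
  thus ?thesis using m by simp
qed

lemma sep_trans: assumes "a \<in> V" "b \<in> V" "c \<in> V" "w \<notin> S a b" "w \<notin> S b c" shows "w \<notin> S a c"
  using S_trans[OF assms(1-3)] assms(4,5) by blast

lemma sep_trans': assumes "a \<in> V" "b \<in> V" "c \<in> V" "w \<in> S a c" "w \<notin> S b c" shows "w \<in> S a b"
  using sep_trans[OF assms(1-3) _ assms(5)] assms(4) by blast

lemma side: assumes "w \<in> V" "c \<in> V" "t \<in> S w c" "t \<noteq> w" shows "w \<notin> S t c"
proof -
  have tV: "t \<in> V" using assms(3) S_sub[OF assms(1,2)] by blast
  show ?thesis
  proof
    assume "w \<in> S t c"
    hence "w \<in> S w t \<inter> S t c" using S_ends[OF assms(1) tV] by blast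
    thus False using S_split(2)[OF assms(1-3)] assms(4) by simp
  qed
qed

lemma common_branch: assumes "w \<in> V" "a \<in> V" "c \<in> V" "a \<noteq> w" "c \<noteq> w" "w \<notin> S a c"
  shows "\<exists>n\<in>N w. n \<in> S w a \<and> n \<in> S w c"
proof -
  obtain n where n: "{w,n} \<in> E" "n \<in> S w a" "n \<noteq> w" using second[OF assms(1,2)] assms(4) by blast
  obtain n' where n': "{w,n'} \<in> E" "n' \<in> S w c" "n' \<noteq> w" using second[OF assms(1,3)] assms(5) by blast
  have nN: "n \<in> N w" "n' \<in> N w" using n n' unfolding N_def by auto
  have nV: "n \<in> V" "n' \<in> V" using nN N_V by auto
  have "n = n'"
  proof (rule ccontr)
    assume "n \<noteq> n'"
    hence 1: "w \<in> S n n'" using nbr_sep nN by blast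
    have 2: "w \<notin> S n a" using side[OF assms(1,2) n(2,3)] .
    have "w \<notin> S n' c" using side[OF assms(1,3) n'(2,3)] .
    hence 3: "w \<notin> S c n'" using S_sym[OF nV(2) assms(3)] by simp
    have "w \<notin> S n c" using sep_trans[OF nV(1) assms(2) assms(3) 2 assms(6)] .
    hence "w \<notin> S n n'" using sep_trans[OF nV(1) assms(3) nV(2) _ 3] by blast
    thus False using 1 by blast
  qed
  thus ?thesis using nN n n' by auto
qed

lemma one_toward: assumes "n \<in> N u" "n' \<in> N u" "u \<notin> S n t" "u \<notin> S n' t" "t \<in> V"
  shows "n = n'"
proof (rule ccontr)
  assume "n \<noteq> n'"
  hence 1: "u \<in> S n n'" using nbr_sep assms by blast
  have V': "n \<in> V" "n' \<in> V" using assms N_V by auto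
  have "u \<notin> S t n'" using assms(4) S_sym[OF V'(2) assms(5)] by simp
  hence "u \<notin> S n n'" using sep_trans[OF V'(1) assms(5) V'(2) assms(3)] by blast
  thus False using 1 by blast
qed

lemma leaf_away: assumes "u \<in> V" "v \<in> V" "w \<in> V" shows "\<exists>a\<in>X. u \<in> S a v \<and> u \<in> S a w"
proof (cases "u \<in> X")
  case True thus ?thesis using S_ends assms by blast
next
  case False
  obtain n1 n2 n3 where n: "n1 \<in> N u" "n2 \<in> N u" "n3 \<in> N u" "n1 \<noteq> n2" "n1 \<noteq> n3" "n2 \<noteq> n3"
    using three_nbrs[OF assms(1) False] by blast
  have "\<exists>n\<in>N u. u \<in> S n v \<and> u \<in> S n w"
  proof (rule ccontr)
    assume "\<not> ?thesis"
    hence bad: "\<And>m. m \<in> N u \<Longrightarrow> u \<notin> S m v \<or> u \<notin> S m w" by blast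
    have c1: "\<And>m m'. m \<in> N u \<Longrightarrow> m' \<in> N u \<Longrightarrow> u \<notin> S m v \<Longrightarrow> u \<notin> S m' v \<Longrightarrow> m = m'"
      using one_toward assms(2) by blast
    have c2: "\<And>m m'. m \<in> N u \<Longrightarrow> m' \<in> N u \<Longrightarrow> u \<notin> S m w \<Longrightarrow> u \<notin> S m' w \<Longrightarrow> m = m'"
      using one_toward assms(3) by blast
    show False
      using bad[OF n(1)] bad[OF n(2)] bad[OF n(3)] c1[OF n(1) n(2)] c1[OF n(1) n(3)] c1[OF n(2) n(3)]
        c2[OF n(1) n(2)] c2[OF n(1) n(3)] c2[OF n(2) n(3)] n(4-6) by blast
  qed
  then obtain n where nn: "n \<in> N u" "u \<in> S n v" "u \<in> S n w" by blast
  obtain a where a: "a \<in> X" "u \<notin> S a n" using branch_leaf[OF nn(1)] by blast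
  have aV: "a \<in> V" "n \<in> V" using a XV nn N_V by auto
  have una: "u \<notin> S n a" using a(2) S_sym[OF aV(2) aV(1)] by simp
  have "u \<in> S a v" using sep_trans[OF aV(2) aV(1) assms(2) una] nn(2) by blast
  moreover have "u \<in> S a w" using sep_trans[OF aV(2) aV(1) assms(3) una] nn(3) by blast
  ultimately show ?thesis using a by blast
qed

definition ED :: "'v \<Rightarrow> 'v \<Rightarrow> 'v \<Rightarrow> 'v \<Rightarrow> bool" where
  "ED a b c d \<longleftrightarrow> (\<forall>e\<in>E. \<not> (e \<subseteq> S a b \<and> e \<subseteq> S c d))"

lemma edge_other: assumes "e \<in> E" shows "\<exists>t\<in>e. t \<noteq> w"
proof -
  obtain s t where "e = {s,t}" "s \<noteq> t" using edge2[OF assms] by blast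
  thus ?thesis by (cases "s = w") auto
qed

lemma Ssym: "u \<in> V \<Longrightarrow> v \<in> V \<Longrightarrow> x \<in> S u v \<Longrightarrow> x \<in> S v u"
  using S_sym by blast

lemma nSsym: "u \<in> V \<Longrightarrow> v \<in> V \<Longrightarrow> x \<notin> S u v \<Longrightarrow> x \<notin> S v u"
  using S_sym by blast

lemma two_side: assumes "w \<in> V" "c \<in> V" "d \<in> V" "t \<in> S w c" "t \<in> S w d" "t \<noteq> w"
  shows "w \<notin> S c d"
proof -
  have tV: "t \<in> V" using assms(1,2,4) S_sub by blast
  have "w \<notin> S t c" "w \<notin> S t d" using side assms by auto
  hence "w \<notin> S c t" using nSsym[OF tV assms(2)] by blast
  thus ?thesis using sep_trans[OF assms(2) tV assms(3)] \<open>w \<notin> S t d\<close> by blast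
qed

lemma S_w_sub: assumes "a \<in> V" "b \<in> V" "w \<in> S a b" shows "S w a \<subseteq> S a b" "S w b \<subseteq> S a b"
proof -
  have wV: "w \<in> V" using assms S_sub by blast
  show "S w a \<subseteq> S a b" using S_sub_split(1)[OF assms] S_sym[OF assms(1) wV] by simp
  show "S w b \<subseteq> S a b" using S_sub_split(2)[OF assms] by simp
qed

lemma sepchar:
  assumes xyz: "x \<in> X" "y \<in> X" "z \<in> X" "x \<noteq> y" "x \<noteq> z" "y \<noteq> z"
    and w: "w \<in> S x y" "w \<in> S y z" "w \<in> S x z"
    and ab: "a \<in> X" "b \<in> X" "a \<noteq> b"
  shows "w \<in> S a b \<longleftrightarrow> \<not> phi ED x y z a b"
proof -
  have XV': "x \<in> V" "y \<in> V" "z \<in> V" "a \<in> V" "b \<in> V" using xyz ab XV by auto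
  have wV: "w \<in> V" using w(1) S_sub XV' by blast
  have wX: "w \<notin> X"
  proof
    assume wx: "w \<in> X"
    have "w = x \<or> w = y" using leaf_interior[OF wx XV'(1,2) w(1)] .
    moreover have "w = y \<or> w = z" using leaf_interior[OF wx XV'(2,3) w(2)] .
    moreover have "w = x \<or> w = z" using leaf_interior[OF wx XV'(1,3) w(3)] .
    ultimately show False using xyz by blast
  qed
  have wpq: "w \<in> S p q" if "p \<in> {x,y,z}" "q \<in> {x,y,z}" "p \<noteq> q" for p q
  proof -
    have w': "w \<in> S y x" "w \<in> S z y" "w \<in> S z x" using w Ssym XV' by blast+
    show ?thesis using that w w' by blast
  qed
  have PV: "p \<in> V" if "p \<in> {x,y,z}" for p using that XV' by auto
  have leafw: "c \<noteq> w" if "c \<in> X" for c using that wX by blast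
  show ?thesis
  proof
    assume wab: "w \<in> S a b"
    show "\<not> phi ED x y z a b"
    proof
      assume "phi ED x y z a b"
      then obtain p q where pq: "p \<in> {x,y,z}" "q \<in> {x,y,z}" "p \<noteq> q" "distinct [a,b,p,q]"
        "ED a b p q" "\<not> ED a p b q" unfolding phi_def by blast
      have pV: "p \<in> V" "q \<in> V" using PV pq by auto
      have pX: "p \<in> X" "q \<in> X" using pq xyz by auto
      have wpq': "w \<in> S p q" using wpq pq by auto
      have step1: "w \<in> S c d" if c: "c \<in> {a,b}" and d: "d \<in> {p,q}" for c d
      proof (rule ccontr)
        assume nw: "w \<notin> S c d"
        have cV: "c \<in> V" "d \<in> V" using c d XV' pV by auto
        have cw: "c \<noteq> w" "d \<noteq> w" using c d ab pX leafw by auto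
        obtain n where n: "n \<in> N w" "n \<in> S w c" "n \<in> S w d"
          using common_branch[OF wV cV cw nw] by blast
        have "{w,n} \<in> E" using n(1) unfolding N_def by simp
        moreover have "{w,n} \<subseteq> S a b" using wab n(2) S_w_sub[OF XV'(4,5) wab] c by auto
        moreover have "{w,n} \<subseteq> S p q" using wpq' n(3) S_w_sub[OF pV wpq'] d by auto
        ultimately show False using pq(5) unfolding ED_def by blast
      qed
      have s1: "w \<in> S a p" "w \<in> S b q" "w \<in> S a q" "w \<in> S p b" using step1 Ssym[OF XV'(5) pV(1) step1[of b p]] by auto
      have "ED a p b q"
        unfolding ED_def
      proof (intro ballI notI)
        fix e assume e: "e \<in> E" "e \<subseteq> S a p \<and> e \<subseteq> S b q"
        obtain t where t: "t \<in> e" "t \<noteq> w" using edge_other[OF e(1)] by blast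
        have t1: "t \<in> S w a \<or> t \<in> S w p" using e t S_split(1)[OF XV'(4) pV(1) s1(1)]
          S_sym[OF XV'(4) wV] by auto
        have t2: "t \<in> S w b \<or> t \<in> S w q" using e t S_split(1)[OF XV'(5) pV(2) s1(2)]
          S_sym[OF XV'(5) wV] by auto
        show False
        proof (cases "t \<in> S w a")
          case True
          show False using t2
          proof
            assume "t \<in> S w b" thus False using two_side[OF wV XV'(4) XV'(5) True _ t(2)] wab by blast
          next
            assume "t \<in> S w q" thus False using two_side[OF wV XV'(4) pV(2) True _ t(2)] s1 by blast
          qed
        next
          case False
          hence tp: "t \<in> S w p" using t1 by blast
          show False using t2
          proof
            assume "t \<in> S w b" thus False using two_side[OF wV pV(1) XV'(5) tp _ t(2)] s1 by blast
          next
            assume "t \<in> S w q" thus False using two_side[OF wV pV(1) pV(2) tp _ t(2)] wpq' by blast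
          qed
        qed
      qed
      thus False using pq(6) by simp
    qed
  next
    assume nphi: "\<not> phi ED x y z a b"
    show "w \<in> S a b"
    proof (rule ccontr)
      assume wab: "w \<notin> S a b"
      have notwo: "False" if "c \<in> {x,y,z}" "d \<in> {x,y,z}" "c \<noteq> d" "w \<notin> S a c" "w \<notin> S a d" for c d
      proof -
        have "w \<notin> S c a" using nSsym[OF XV'(4) PV[OF that(1)] that(4)] .
        hence "w \<notin> S c d" using sep_trans[OF PV[OF that(1)] XV'(4) PV[OF that(2)] _ that(5)] by blast
        thus False using wpq that by blast
      qed
      obtain p q where pq: "p \<in> {x,y,z}" "q \<in> {x,y,z}" "p \<noteq> q" "w \<in> S a p" "w \<in> S a q"
      proof (cases "w \<in> S a x")
        case True
        show ?thesis
        proof (cases "w \<in> S a y")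
          case True thus ?thesis using that \<open>w \<in> S a x\<close> xyz by blast
        next
          case False
          hence "w \<in> S a z" using notwo[of y z] xyz by blast
          thus ?thesis using that \<open>w \<in> S a x\<close> xyz by blast
        qed
      next
        case False
        hence "w \<in> S a y" "w \<in> S a z" using notwo[of x y] notwo[of x z] xyz by blast+
        thus ?thesis using that xyz by blast
      qed
      have pV: "p \<in> V" "q \<in> V" using PV pq by auto
      have pX: "p \<in> X" "q \<in> X" using pq xyz by auto
      have wpq': "w \<in> S p q" using wpq pq by auto
      have dist: "distinct [a,b,p,q]"
      proof -
        have "a \<noteq> p" using pq(4) S_refl[OF XV'(4)] leafw[OF ab(1)] by auto
        moreover have "a \<noteq> q" using pq(5) S_refl[OF XV'(4)] leafw[OF ab(1)] by auto
        moreover have "b \<noteq> p" using pq(4) wab by auto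
        moreover have "b \<noteq> q" using pq(5) wab by auto
        ultimately show ?thesis using ab(3) pq(3) by simp
      qed
      have ed: "ED a b p q"
        unfolding ED_def
      proof (intro ballI notI)
        fix e assume e: "e \<in> E" "e \<subseteq> S a b \<and> e \<subseteq> S p q"
        obtain t where t: "t \<in> e" using edge_other[OF e(1)] by blast
        have tab: "t \<in> S a b" "t \<in> S p q" using t e by auto
        have tV: "t \<in> V" using tab S_sub XV' by blast
        have tw: "t \<noteq> w" using tab wab by auto
        have wat: "w \<notin> S a t" using S_sub_split(1)[OF XV'(4,5) tab(1)] wab by auto
        have "t \<in> S p w \<or> t \<in> S w q" using S_split(1)[OF pV wpq'] tab by auto
        thus False
        proof
          assume "t \<in> S p w"
          hence "t \<in> S w p" using Ssym[OF pV(1) wV] by blast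
          hence "w \<notin> S t p" using side[OF wV pV(1) _ tw] by blast
          thus False using sep_trans[OF XV'(4) tV pV(1) wat] pq(4) by blast
        next
          assume "t \<in> S w q"
          hence "w \<notin> S t q" using side[OF wV pV(2) _ tw] by blast
          thus False using sep_trans[OF XV'(4) tV pV(2) wat] pq(5) by blast
        qed
      qed
      have ned: "\<not> ED a p b q"
      proof -
        have aw: "a \<noteq> w" "b \<noteq> w" using ab leafw by auto
        obtain n where n: "n \<in> N w" "n \<in> S w a" "n \<in> S w b"
          using common_branch[OF wV XV'(4,5) aw wab] by blast
        have wbq: "w \<in> S b q"
        proof (rule ccontr)
          assume "w \<notin> S b q"
          thus False using sep_trans[OF XV'(4) XV'(5) pV(2) wab] pq(5) by blast
        qed
        have "{w,n} \<in> E" using n(1) unfolding N_def by simp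
        moreover have "{w,n} \<subseteq> S a p" using pq(4) n(2) S_w_sub[OF XV'(4) pV(1) pq(4)] by auto
        moreover have "{w,n} \<subseteq> S b q" using wbq n(3) S_w_sub[OF XV'(5) pV(2) wbq] by auto
        ultimately show ?thesis unfolding ED_def by blast
      qed
      have "phi ED x y z a b" unfolding phi_def using pq(1-3) dist ed ned by blast
      thus False using nphi by simp
    qed
  qed
qed

definition Sep :: "'v \<Rightarrow> ('v \<times> 'v) set" where
  "Sep v = {(a,b). a \<in> X \<and> b \<in> X \<and> v \<in> S a b}"

lemma Sep_mem: "(a,b) \<in> Sep v \<longleftrightarrow> a \<in> X \<and> b \<in> X \<and> v \<in> S a b"
  unfolding Sep_def by simp

lemma sep_leaf: assumes "x \<in> X" shows "Sep x = {(a,b). a \<in> X \<and> b \<in> X \<and> (x = a \<or> x = b)}"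
proof -
  have "x \<in> S a b \<longleftrightarrow> (x = a \<or> x = b)" if "a \<in> X" "b \<in> X" for a b
  proof -
    have V': "a \<in> V" "b \<in> V" using that XV by auto
    show ?thesis using leaf_interior[OF assms V'] S_ends[OF V'] by blast
  qed
  thus ?thesis unfolding Sep_def by blast
qed

lemma internal_triple: assumes "v \<in> V" "v \<notin> X"
  shows "\<exists>x y z. x \<in> X \<and> y \<in> X \<and> z \<in> X \<and> x \<noteq> y \<and> x \<noteq> z \<and> y \<noteq> z \<and>
     v \<in> S x y \<and> v \<in> S y z \<and> v \<in> S x z"
proof -
  obtain n1 n2 n3 where n: "n1 \<in> N v" "n2 \<in> N v" "n3 \<in> N v" "n1 \<noteq> n2" "n1 \<noteq> n3" "n2 \<noteq> n3"
    using three_nbrs[OF assms] by blast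
  obtain a1 where a1: "a1 \<in> X" "v \<notin> S a1 n1" using branch_leaf n by blast
  obtain a2 where a2: "a2 \<in> X" "v \<notin> S a2 n2" using branch_leaf n by blast
  obtain a3 where a3: "a3 \<in> X" "v \<notin> S a3 n3" using branch_leaf n by blast
  have key: "v \<in> S a a'" if "a \<in> X" "a' \<in> X" "m \<in> N v" "m' \<in> N v" "m \<noteq> m'"
    "v \<notin> S a m" "v \<notin> S a' m'" for a a' m m'
  proof (rule ccontr)
    assume nv: "v \<notin> S a a'"
    have V': "a \<in> V" "a' \<in> V" "m \<in> V" "m' \<in> V" using that XV N_V by auto
    have "v \<notin> S m a" using nSsym[OF V'(1) V'(3) that(6)] .
    hence "v \<notin> S m a'" using sep_trans[OF V'(3,1,2) _ nv] by blast
    hence "v \<notin> S m m'" using sep_trans[OF V'(3,2,4) _ that(7)] by blast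
    thus False using nbr_sep that by blast
  qed
  have s: "v \<in> S a1 a2" "v \<in> S a2 a3" "v \<in> S a1 a3"
    using key[OF a1(1) a2(1) n(1,2,4) a1(2) a2(2)] key[OF a2(1) a3(1) n(2,3,6) a2(2) a3(2)]
      key[OF a1(1) a3(1) n(1,3,5) a1(2) a3(2)] by auto
  have "a \<noteq> a'" if "a \<in> X" "v \<in> S a a'" for a a'
  proof
    assume "a = a'"
    hence "v = a" using that S_refl XV by auto
    thus False using assms(2) that by simp
  qed
  hence "a1 \<noteq> a2" "a2 \<noteq> a3" "a1 \<noteq> a3" using s a1 a2 by auto
  thus ?thesis using s a1 a2 a3 by blast
qed

lemma S_sub2: assumes "a \<in> V" "b \<in> V" "u \<in> S a b" "v \<in> S a b" shows "S u v \<subseteq> S a b"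
proof -
  have V': "u \<in> V" "v \<in> V" using assms S_sub by auto
  have "u \<in> S a v \<or> u \<in> S v b" using S_split(1)[OF assms(1,2,4)] assms(3) by auto
  thus ?thesis
  proof
    assume "u \<in> S a v"
    thus ?thesis using S_sub_split(2)[OF assms(1) V'(2)] S_sub_split(1)[OF assms(1,2,4)] by blast
  next
    assume "u \<in> S v b"
    hence "S v u \<subseteq> S v b" using S_sub_split(1)[OF V'(2) assms(2)] by blast
    thus ?thesis using S_sub_split(2)[OF assms(1,2,4)] S_sym[OF V'] by blast
  qed
qed

lemma between: assumes "u \<in> V" "v \<in> V" "w \<in> V" "u \<noteq> v"
  shows "w \<in> S u v \<longleftrightarrow> Sep u \<inter> Sep v \<subseteq> Sep w"
proof
  assume "w \<in> S u v"
  show "Sep u \<inter> Sep v \<subseteq> Sep w"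
  proof
    fix p assume p: "p \<in> Sep u \<inter> Sep v"
    obtain a b where ab: "p = (a,b)" by (cases p)
    have ab': "a \<in> X" "b \<in> X" "u \<in> S a b" "v \<in> S a b" using p ab unfolding Sep_def by auto
    have V': "a \<in> V" "b \<in> V" using ab' XV by auto
    have "w \<in> S a b" using S_sub2[OF V' ab'(3,4)] \<open>w \<in> S u v\<close> by blast
    thus "p \<in> Sep w" unfolding Sep_def using ab ab' by simp
  qed
next
  assume sub: "Sep u \<inter> Sep v \<subseteq> Sep w"
  show "w \<in> S u v"
  proof (rule ccontr)
    assume nw: "w \<notin> S u v"
    have wu: "w \<noteq> u" "w \<noteq> v" using nw S_ends assms by auto
    obtain a where a: "a \<in> X" "u \<in> S a v" "u \<in> S a w" using leaf_away[OF assms(1,2,3)] by blast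
    obtain b where b: "b \<in> X" "v \<in> S b u" "v \<in> S b w" using leaf_away[OF assms(2,1,3)] by blast
    have V': "a \<in> V" "b \<in> V" using a b XV by auto
    have "v \<in> S u b" using Ssym[OF V'(2) assms(1) b(2)] .
    hence "u \<notin> S v b" using side[OF assms(1) V'(2) _ ] assms(4) by blast
    hence ubv: "u \<notin> S b v" using nSsym[OF assms(2) V'(2)] by blast
    have uab: "u \<in> S a b" using sep_trans'[OF V'(1,2) assms(2) a(2) ubv] .
    have "u \<in> S v a" using Ssym[OF V'(1) assms(2) a(2)] .
    hence "v \<notin> S u a" using side[OF assms(2) V'(1)] assms(4) by blast
    hence vau: "v \<notin> S a u" using nSsym[OF assms(1) V'(1)] by blast
    have vba: "v \<in> S b a" using sep_trans'[OF V'(2,1) assms(1) b(2) vau] .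
    hence vab: "v \<in> S a b" using Ssym[OF V'(2,1)] by blast
    have "u \<in> S w a" using Ssym[OF V'(1) assms(3) a(3)] .
    hence wua: "w \<notin> S u a" using side[OF assms(3) V'(1)] wu by blast
    have "v \<in> S w b" using Ssym[OF V'(2) assms(3) b(3)] .
    hence wvb: "w \<notin> S v b" using side[OF assms(3) V'(2)] wu by blast
    have "w \<notin> S a u" using nSsym[OF assms(1) V'(1) wua] .
    have "w \<notin> S u b" using sep_trans[OF assms(1) assms(2) V'(2) nw wvb] .
    hence wab: "w \<notin> S a b" using sep_trans[OF V'(1) assms(1) V'(2) \<open>w \<notin> S a u\<close>] by blast
    have "(a,b) \<in> Sep u \<inter> Sep v" using uab vab a b by (simp add: Sep_mem)
    hence "(a,b) \<in> Sep w" using sub by blast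
    thus False using wab by (simp add: Sep_mem)
  qed
qed

lemma sep_inj: assumes "u \<in> V" "v \<in> V" "u \<noteq> v" shows "Sep u \<noteq> Sep v"
proof -
  obtain a where a: "a \<in> X" "u \<in> S a v" using leaf_away[OF assms(1,2,2)] by blast
  have aV: "a \<in> V" using a XV by auto
  obtain b where b: "b \<in> X" "u \<in> S b v" "u \<in> S b a" using leaf_away[OF assms(1,2) aV] by blast
  have bV: "b \<in> V" using b XV by auto
  have "u \<in> S v a" using Ssym[OF aV assms(2) a(2)] .
  hence "v \<notin> S u a" using side[OF assms(2) aV] assms(3) by blast
  hence vau: "v \<notin> S a u" using nSsym[OF assms(1) aV] by blast
  have "u \<in> S v b" using Ssym[OF bV assms(2) b(2)] .
  hence "v \<notin> S u b" using side[OF assms(2) bV] assms(3) by blast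
  hence "v \<notin> S a b" using sep_trans[OF aV assms(1) bV vau] by blast
  moreover have "u \<in> S a b" using Ssym[OF bV aV b(3)] .
  ultimately have "(a,b) \<in> Sep u" "(a,b) \<notin> Sep v" using a b by (auto simp: Sep_mem)
  thus ?thesis by blast
qed

lemma PE: assumes "x \<in> V" "y \<in> V" shows "path_edges (P x y) = {e\<in>E. e \<subseteq> S x y}"
proof
  define p where "p = P x y"
  have pp: "is_path V E p" "hd p = x" "last p = y" using P[OF assms] p_def by auto
  show "path_edges (P x y) \<subseteq> {e\<in>E. e \<subseteq> S x y}"
    using pp(1) unfolding path_edges_def S_def p_def[symmetric] is_path_def by auto
  show "{e\<in>E. e \<subseteq> S x y} \<subseteq> path_edges (P x y)"
  proof
    fix e assume e: "e \<in> {e\<in>E. e \<subseteq> S x y}"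
    obtain s t where st: "e = {s,t}" "s \<noteq> t" using edge2 e by blast
    obtain i j where ij: "i < length p" "j < length p" "p ! i = s" "p ! j = t"
      using e st unfolding S_def p_def[symmetric] by (auto simp: in_set_conv_nth)
    have gen: "Suc i' = j'" if "i' < j'" "j' < length p" "{p!i', p!j'} \<in> E" for i' j'
    proof -
      define r where "r = drop i' (take (Suc j') p)"
      have r: "is_path V E r" unfolding r_def using path_take[OF pp(1) that(2)] that
        by (intro path_drop) auto
      have "hd r = p ! i'" unfolding r_def using that by (simp add: hd_drop_conv_nth)
      moreover have "last r = p ! j'" unfolding r_def using that
        by (simp add: last_drop take_Suc_conv_app_nth)
      ultimately have "P (p!i') (p!j') = r" using P_eqI r by simp
      hence "r = [p!i', p!j']" using P_edge that(3) by simp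
      hence "length r = 2" by simp
      thus ?thesis unfolding r_def using that by simp
    qed
    have eE: "e \<in> E" using e by simp
    have "i \<noteq> j" using ij st by auto
    hence "i < j \<or> j < i" by arith
    thus "e \<in> path_edges (P x y)"
    proof
      assume "i < j"
      hence "Suc i = j" using gen[of i j] ij eE st by simp
      thus ?thesis unfolding path_edges_def p_def[symmetric] using ij st by auto
    next
      assume "j < i"
      hence "Suc j = i" using gen[of j i] ij eE st by (simp add: insert_commute)
      hence "e = {p ! j, p ! Suc j}" using ij st by (simp add: insert_commute)
      thus ?thesis unfolding path_edges_def p_def[symmetric] using ij \<open>Suc j = i\<close> by auto
    qed
  qed
qed

lemma cord_edges_eq: assumes "x \<in> V" "y \<in> V"
  shows "cord_edges V E {x,y} = {e\<in>E. e \<subseteq> S x y}"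
proof -
  have "path_edges p = {e\<in>E. e \<subseteq> S x y}" if "is_path V E p" "{hd p, last p} = {x,y}" for p
  proof -
    have "(hd p = x \<and> last p = y) \<or> (hd p = y \<and> last p = x)" using that(2) by (auto simp: doubleton_eq_iff)
    thus ?thesis
    proof
      assume "hd p = x \<and> last p = y"
      hence "p = P x y" using P_eqI that(1) by simp
      thus ?thesis using PE assms by simp
    next
      assume "hd p = y \<and> last p = x"
      hence "p = P y x" using P_eqI that(1) by simp
      thus ?thesis using PE[OF assms(2,1)] S_sym[OF assms] by simp
    qed
  qed
  moreover have "is_path V E (P x y) \<and> {hd (P x y), last (P x y)} = {x,y}" using P[OF assms] by simp
  ultimately show ?thesis unfolding cord_edges_def by blast
qed

lemma lam_eq: assumes "x \<in> V" "y \<in> V"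
  shows "lam V E {x,y} \<omega> = (\<Sum>e\<in>E. if e \<subseteq> S x y then \<omega> e else 0)"
  unfolding lam_def cord_edges_eq[OF assms] using finE by (simp add: sum.inter_filter)

lemma lam_ind: assumes "x \<in> V" "y \<in> V" "e0 \<in> E"
  shows "lam V E {x,y} (\<lambda>e. if e = e0 then 1 else 0) = (if e0 \<subseteq> S x y then 1 else 0)"
  unfolding lam_def cord_edges_eq[OF assms(1,2)] using finE assms(3)
  by (simp add: sum.delta)

lemma edge_one_side: assumes "{s,t} \<in> E" "x \<in> V" shows "s \<in> S x t \<longleftrightarrow> t \<notin> S x s"
proof -
  have V': "s \<in> V" "t \<in> V" "s \<noteq> t" using edgeV edge_ne assms by auto
  obtain m where m: "m \<in> S x s" "m \<in> S s t" "m \<in> S x t" using median[OF assms(2) V'(1,2)] by blast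
  have "m = s \<or> m = t" using m(2) S_edge[OF assms(1)] by auto
  hence "s \<in> S x t \<or> t \<in> S x s" using m by auto
  moreover have "\<not> (s \<in> S x t \<and> t \<in> S x s)"
  proof
    assume a: "s \<in> S x t \<and> t \<in> S x s"
    hence "t \<in> S x s \<inter> S s t" using S_ends[OF V'(1,2)] by auto
    thus False using S_split(2)[OF assms(2) V'(2)] a V' by auto
  qed
  ultimately show ?thesis by blast
qed

lemma edge_cut: assumes "{s,t} \<in> E" "x \<in> V" "y \<in> V"
  shows "{s,t} \<subseteq> S x y \<longleftrightarrow> (s \<in> S x t \<longleftrightarrow> s \<notin> S y t)"
proof -
  have V': "s \<in> V" "t \<in> V" "s \<noteq> t" using edgeV edge_ne assms by auto
  have ox: "s \<in> S x t \<longleftrightarrow> t \<notin> S x s" using edge_one_side[OF assms(1,2)] .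
  have oy: "s \<in> S y t \<longleftrightarrow> t \<notin> S y s" using edge_one_side[OF assms(1,3)] .
  have gen: "{s,t} \<subseteq> S x' y'" if xy: "x' \<in> V" "y' \<in> V" "s \<in> S x' t" "\<not> s \<in> S y' t"
    and o1: "s \<in> S x' t \<longleftrightarrow> t \<notin> S x' s" and o2: "s \<in> S y' t \<longleftrightarrow> t \<notin> S y' s" for x' y'
  proof -
    have tys: "t \<in> S y' s" using o2 xy(4) by blast
    have txs: "t \<notin> S x' s" using o1 xy(3) by blast
    have "t \<in> S x' y'"
    proof (rule ccontr)
      assume "t \<notin> S x' y'"
      hence "t \<notin> S y' x'" using nSsym[OF xy(1,2)] by blast
      hence "t \<notin> S y' s" using sep_trans[OF xy(2) xy(1) V'(1) _ txs] by blast
      thus False using tys by blast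
    qed
    moreover have "s \<in> S x' y'" using sep_trans'[OF xy(1,2) V'(2) xy(3,4)] .
    ultimately show ?thesis by blast
  qed
  show ?thesis
  proof (cases "s \<in> S x t")
    case True
    show ?thesis
    proof (cases "s \<in> S y t")
      case True
      hence "t \<notin> S y s" "t \<notin> S x s" using ox oy \<open>s \<in> S x t\<close> by auto
      hence "t \<notin> S x y" using sep_trans[OF assms(2) V'(1) assms(3)] nSsym[OF assms(3) V'(1)] by blast
      thus ?thesis using True \<open>s \<in> S x t\<close> by auto
    next
      case False
      thus ?thesis using gen[OF assms(2,3) \<open>s \<in> S x t\<close> False ox oy] True by blast
    qed
  next
    case False
    show ?thesis
    proof (cases "s \<in> S y t")
      case True
      have "{s,t} \<subseteq> S y x" using gen[OF assms(3,2) True False oy ox] .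
      thus ?thesis using S_sym[OF assms(2,3)] True False by simp
    next
      case False
      have "s \<notin> S t y" using nSsym[OF assms(3) V'(2) False] .
      hence "s \<notin> S x y" using sep_trans[OF assms(2) V'(2) assms(3) \<open>s \<notin> S x t\<close>] by blast
      thus ?thesis using False \<open>s \<notin> S x t\<close> by auto
    qed
  qed
qed

lemma sum4: assumes "distinct [a,b,c,d]"
  shows "(\<Sum>q\<in>{{a,c},{b,d},{a,d},{b,c}}. f q) = f {a,c} + f {b,d} + f {a,d} + f {b,c}"
proof -
  have n1: "{a,c} \<notin> {{b,d},{a,d},{b,c}}" using assms by (auto simp: doubleton_eq_iff)
  have n2: "{b,d} \<notin> {{a,d},{b,c}}" using assms by (auto simp: doubleton_eq_iff)
  have n3: "{a,d} \<notin> {{b,c}}" using assms by (auto simp: doubleton_eq_iff)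
  show ?thesis using n1 n2 n3 by (simp add: add.assoc)
qed

lemma lamind_pend: assumes "x \<in> X" "N x = {n}" "y \<in> X" "z \<in> X" "y \<noteq> z"
  shows "lam V E {y,z} (\<lambda>e. if e = {x,n} then 1 else 0) = (if x = y \<or> x = z then 1 else 0)"
proof -
  have V': "y \<in> V" "z \<in> V" "x \<in> V" using assms XV by auto
  have eE: "{x,n} \<in> E" using assms(2) unfolding N_def by auto
  have "{x,n} \<subseteq> S y z \<longleftrightarrow> x = y \<or> x = z"
  proof
    assume "{x,n} \<subseteq> S y z"
    thus "x = y \<or> x = z" using leaf_interior[OF assms(1) V'(1,2)] by blast
  next
    assume h: "x = y \<or> x = z"
    have gen: "{x,n} \<subseteq> S x w" if w: "w \<in> V" "w \<noteq> x" for w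
    proof -
      obtain m where m: "{x,m} \<in> E" "m \<in> S x w" using second[OF V'(3) w(1)] w(2) by blast
      have "m \<in> N x" using m unfolding N_def by simp
      hence "m = n" using assms(2) by simp
      thus ?thesis using m S_ends[OF V'(3) w(1)] by blast
    qed
    show "{x,n} \<subseteq> S y z"
    proof (cases "x = y")
      case True thus ?thesis using gen[OF V'(2)] assms(5) by simp
    next
      case False
      hence "x = z" using h by simp
      thus ?thesis using gen[OF V'(1)] False S_sym[OF V'(1,2)] by simp
    qed
  qed
  thus ?thesis using lam_ind[OF V'(1,2) eE] by simp
qed

lemma quartet: assumes X4: "a \<in> X" "b \<in> X" "c \<in> X" "d \<in> X" and dist: "distinct [a,b,c,d]"
  shows "{{a,c},{b,d},{a,d},{b,c}} \<in> M_indep X V E \<longleftrightarrow> \<not> ED a b c d"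
proof -
  define Q where "Q = {{a,c},{b,d},{a,d},{b,c}}"
  have V': "a \<in> V" "b \<in> V" "c \<in> V" "d \<in> V" using X4 XV by auto
  have Qc: "Q \<subseteq> cords X" unfolding Q_def cords_def using X4 dist by auto
  have finQ: "finite Q" unfolding Q_def by simp
  have S4: "(\<Sum>q\<in>Q. f q) = f {a,c} + f {b,d} + f {a,d} + f {b,c}" for f :: "'v set \<Rightarrow> real"
    unfolding Q_def using sum4[OF dist] .
  have ind_iff: "Q \<in> M_indep X V E \<longleftrightarrow>
     (\<forall>\<alpha> :: 'v set \<Rightarrow> real. (\<forall>\<omega>. \<alpha> {a,c} * lam V E {a,c} \<omega> + \<alpha> {b,d} * lam V E {b,d} \<omega>
        + \<alpha> {a,d} * lam V E {a,d} \<omega> + \<alpha> {b,c} * lam V E {b,c} \<omega> = 0) \<longrightarrow> (\<forall>q\<in>Q. \<alpha> q = 0))"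
    unfolding M_indep_def lin_indep_cords_def using Qc finQ S4 by simp
  show ?thesis unfolding Q_def[symmetric] ind_iff
  proof
    assume H: "\<forall>\<alpha> :: 'v set \<Rightarrow> real. (\<forall>\<omega>. \<alpha> {a,c} * lam V E {a,c} \<omega> + \<alpha> {b,d} * lam V E {b,d} \<omega>
        + \<alpha> {a,d} * lam V E {a,d} \<omega> + \<alpha> {b,c} * lam V E {b,c} \<omega> = 0) \<longrightarrow> (\<forall>q\<in>Q. \<alpha> q = 0)"
    show "\<not> ED a b c d"
    proof
      assume ed: "ED a b c d"
      define \<alpha> :: "'v set \<Rightarrow> real" where "\<alpha> q = (if q = {a,c} \<or> q = {b,d} then 1 else -1)" for q
      have ne: "{a,d} \<noteq> {a,c}" "{a,d} \<noteq> {b,d}" "{b,c} \<noteq> {a,c}" "{b,c} \<noteq> {b,d}"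
        using dist by (auto simp: doubleton_eq_iff)
      have "\<alpha> {a,c} * lam V E {a,c} \<omega> + \<alpha> {b,d} * lam V E {b,d} \<omega>
        + \<alpha> {a,d} * lam V E {a,d} \<omega> + \<alpha> {b,c} * lam V E {b,c} \<omega> = 0" for \<omega>
      proof -
        have "\<alpha> {a,c} * lam V E {a,c} \<omega> + \<alpha> {b,d} * lam V E {b,d} \<omega>
          + \<alpha> {a,d} * lam V E {a,d} \<omega> + \<alpha> {b,c} * lam V E {b,c} \<omega>
          = lam V E {a,c} \<omega> + lam V E {b,d} \<omega> - lam V E {a,d} \<omega> - lam V E {b,c} \<omega>"
          unfolding \<alpha>_def using ne by simp
        also have "\<dots> = (\<Sum>e\<in>E. (if e \<subseteq> S a c then \<omega> e else 0) + (if e \<subseteq> S b d then \<omega> e else 0)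
            - (if e \<subseteq> S a d then \<omega> e else 0) - (if e \<subseteq> S b c then \<omega> e else 0))"
          unfolding lam_eq[OF V'(1,3)] lam_eq[OF V'(2,4)] lam_eq[OF V'(1,4)] lam_eq[OF V'(2,3)]
          by (simp add: sum.distrib sum_subtractf)
        also have "\<dots> = 0"
        proof (rule sum.neutral, rule ballI)
          fix e assume eE: "e \<in> E"
          obtain s t where st: "e = {s,t}" using edge2[OF eE] by blast
          have eE': "{s,t} \<in> E" using eE st by simp
          have nab: "\<not> ({s,t} \<subseteq> S a b \<and> {s,t} \<subseteq> S c d)" using ed eE st unfolding ED_def by blast
          show "(if e \<subseteq> S a c then \<omega> e else 0) + (if e \<subseteq> S b d then \<omega> e else 0)
            - (if e \<subseteq> S a d then \<omega> e else 0) - (if e \<subseteq> S b c then \<omega> e else 0) = 0"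
            using nab unfolding st edge_cut[OF eE' V'(1,2)] edge_cut[OF eE' V'(3,4)]
              edge_cut[OF eE' V'(1,3)] edge_cut[OF eE' V'(2,4)] edge_cut[OF eE' V'(1,4)]
              edge_cut[OF eE' V'(2,3)]
            by (cases "s \<in> S a t"; cases "s \<in> S b t"; cases "s \<in> S c t"; cases "s \<in> S d t") simp_all
        qed
        finally show ?thesis .
      qed
      hence "\<forall>q\<in>Q. \<alpha> q = 0" using H by blast
      moreover have "{a,c} \<in> Q" unfolding Q_def by simp
      ultimately have "\<alpha> {a,c} = 0" by blast
      thus False unfolding \<alpha>_def by simp
    qed
  next
    assume ned: "\<not> ED a b c d"
    show "\<forall>\<alpha> :: 'v set \<Rightarrow> real. (\<forall>\<omega>. \<alpha> {a,c} * lam V E {a,c} \<omega> + \<alpha> {b,d} * lam V E {b,d} \<omega>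
        + \<alpha> {a,d} * lam V E {a,d} \<omega> + \<alpha> {b,c} * lam V E {b,c} \<omega> = 0) \<longrightarrow> (\<forall>q\<in>Q. \<alpha> q = 0)"
    proof (intro allI impI)
      fix \<alpha> :: "'v set \<Rightarrow> real"
      assume H: "\<forall>\<omega>. \<alpha> {a,c} * lam V E {a,c} \<omega> + \<alpha> {b,d} * lam V E {b,d} \<omega>
        + \<alpha> {a,d} * lam V E {a,d} \<omega> + \<alpha> {b,c} * lam V E {b,c} \<omega> = 0"
      have dd: "a \<noteq> b" "a \<noteq> c" "a \<noteq> d" "b \<noteq> c" "b \<noteq> d" "c \<noteq> d" using dist by auto
      obtain na where na: "N a = {na}" using leaf_nbr X4 by blast
      obtain nb where nb: "N b = {nb}" using leaf_nbr X4 by blast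
      obtain nc where nc: "N c = {nc}" using leaf_nbr X4 by blast
      obtain nd where nd: "N d = {nd}" using leaf_nbr X4 by blast
      have ea: "\<alpha> {a,c} + \<alpha> {a,d} = 0"
        using H[rule_format, of "\<lambda>e. if e = {a,na} then 1 else 0"] X4 dd
        by (simp add: lamind_pend[OF X4(1) na])
      have eb: "\<alpha> {b,d} + \<alpha> {b,c} = 0"
        using H[rule_format, of "\<lambda>e. if e = {b,nb} then 1 else 0"] X4 dd
        by (simp add: lamind_pend[OF X4(2) nb])
      have ec: "\<alpha> {a,c} + \<alpha> {b,c} = 0"
        using H[rule_format, of "\<lambda>e. if e = {c,nc} then 1 else 0"] X4 dd
        by (simp add: lamind_pend[OF X4(3) nc])
      have edd: "\<alpha> {b,d} + \<alpha> {a,d} = 0"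
        using H[rule_format, of "\<lambda>e. if e = {d,nd} then 1 else 0"] X4 dd
        by (simp add: lamind_pend[OF X4(4) nd])
      obtain e where e: "e \<in> E" "e \<subseteq> S a b" "e \<subseteq> S c d" using ned unfolding ED_def by blast
      obtain s t where st: "e = {s,t}" using edge2[OF e(1)] by blast
      have eE': "{s,t} \<in> E" using e st by simp
      have li: "lam V E {x,y} (\<lambda>e'. if e' = {s,t} then 1 else 0) = (if (s \<in> S x t \<longleftrightarrow> s \<notin> S y t) then 1 else 0)"
        if "x \<in> V" "y \<in> V" for x y
        using lam_ind[OF that eE'] edge_cut[OF eE' that] by simp
      have cab: "s \<in> S a t \<longleftrightarrow> s \<notin> S b t" using e st edge_cut[OF eE' V'(1,2)] by simp
      have ccd: "s \<in> S c t \<longleftrightarrow> s \<notin> S d t" using e st edge_cut[OF eE' V'(3,4)] by simp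
      have main: "\<alpha> {a,c} * (if (s \<in> S a t \<longleftrightarrow> s \<notin> S c t) then 1 else 0)
        + \<alpha> {b,d} * (if (s \<in> S b t \<longleftrightarrow> s \<notin> S d t) then 1 else 0)
        + \<alpha> {a,d} * (if (s \<in> S a t \<longleftrightarrow> s \<notin> S d t) then 1 else 0)
        + \<alpha> {b,c} * (if (s \<in> S b t \<longleftrightarrow> s \<notin> S c t) then 1 else 0) = 0"
        using H[rule_format, of "\<lambda>e'. if e' = {s,t} then 1 else 0"]
        unfolding li[OF V'(1,3)] li[OF V'(2,4)] li[OF V'(1,4)] li[OF V'(2,3)] .
      have "\<alpha> {a,c} = 0"
        using main cab ccd ea eb ec edd
        by (cases "s \<in> S a t"; cases "s \<in> S c t") auto
      hence "\<alpha> {b,d} = 0" "\<alpha> {a,d} = 0" "\<alpha> {b,c} = 0" using ea eb ec edd by linarith+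
      thus "\<forall>q\<in>Q. \<alpha> q = 0" using \<open>\<alpha> {a,c} = 0\<close> unfolding Q_def by auto
    qed
  qed
qed

lemma median_notleaf:
  assumes xyz: "x \<in> X" "y \<in> X" "z \<in> X" "x \<noteq> y" "x \<noteq> z" "y \<noteq> z"
    and w: "w \<in> S x y" "w \<in> S y z" "w \<in> S x z"
  shows "w \<notin> X"
proof
  assume wx: "w \<in> X"
  have XV': "x \<in> V" "y \<in> V" "z \<in> V" using xyz XV by auto
  have "w = x \<or> w = y" using leaf_interior[OF wx XV'(1,2) w(1)] .
  moreover have "w = y \<or> w = z" using leaf_interior[OF wx XV'(2,3) w(2)] .
  moreover have "w = x \<or> w = z" using leaf_interior[OF wx XV'(1,3) w(3)] .
  ultimately show False using xyz by blast
qed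

lemma sep_median:
  assumes xyz: "x \<in> X" "y \<in> X" "z \<in> X" "x \<noteq> y" "x \<noteq> z" "y \<noteq> z"
    and w: "w \<in> S x y" "w \<in> S y z" "w \<in> S x z"
  shows "Sep w = {(a,b). a \<in> X \<and> b \<in> X \<and> a \<noteq> b \<and> \<not> phi ED x y z a b}"
proof -
  have wX: "w \<notin> X" using median_notleaf[OF xyz w] .
  have "(a,b) \<in> Sep w \<longleftrightarrow> a \<in> X \<and> b \<in> X \<and> a \<noteq> b \<and> \<not> phi ED x y z a b" for a b
  proof (cases "a \<in> X \<and> b \<in> X")
    case True
    show ?thesis
    proof (cases "a = b")
      case True
      hence "w \<notin> S a b" using S_refl XV \<open>a \<in> X \<and> b \<in> X\<close> wX by auto
      thus ?thesis using True by (simp add: Sep_mem)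
    next
      case False
      thus ?thesis using sepchar[OF xyz w] \<open>a \<in> X \<and> b \<in> X\<close> by (simp add: Sep_mem)
    qed
  next
    case False thus ?thesis by (auto simp: Sep_mem)
  qed
  thus ?thesis by auto
qed

lemma adj_char: assumes "u \<in> V" "v \<in> V"
  shows "{u,v} \<in> E \<longleftrightarrow> u \<noteq> v \<and> (\<forall>w\<in>V. Sep u \<inter> Sep v \<subseteq> Sep w \<longrightarrow> w = u \<or> w = v)"
proof
  assume e: "{u,v} \<in> E"
  have uv: "u \<noteq> v" using edge_ne[OF e] .
  have "\<forall>w\<in>V. Sep u \<inter> Sep v \<subseteq> Sep w \<longrightarrow> w = u \<or> w = v"
    using between[OF assms _ uv] S_edge[OF e] by blast
  thus "u \<noteq> v \<and> (\<forall>w\<in>V. Sep u \<inter> Sep v \<subseteq> Sep w \<longrightarrow> w = u \<or> w = v)" using uv by simp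
next
  assume h: "u \<noteq> v \<and> (\<forall>w\<in>V. Sep u \<inter> Sep v \<subseteq> Sep w \<longrightarrow> w = u \<or> w = v)"
  obtain n where n: "{u,n} \<in> E" "n \<in> S u v" "n \<noteq> u" using second[OF assms] h by blast
  have nV: "n \<in> V" using n(2) S_sub[OF assms] by blast
  have "Sep u \<inter> Sep v \<subseteq> Sep n" using between[OF assms nV] n(2) h by blast
  hence "n = v" using h nV n(3) by blast
  thus "{u,v} \<in> E" using n(1) by simp
qed

end

lemma iso_sym: assumes "X_iso X V1 E1 V2 E2" "X \<subseteq> V1" shows "X_iso X V2 E2 V1 E1"
proof -
  obtain f where f: "bij_betw f V1 V2" "\<forall>u\<in>V1. \<forall>v\<in>V1. {u,v} \<in> E1 \<longleftrightarrow> {f u, f v} \<in> E2"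
    "\<forall>x\<in>X. f x = x" using assms(1) unfolding X_iso_def by blast
  define g where "g = inv_into V1 f"
  have inj: "inj_on f V1" using bij_betw_imp_inj_on[OF f(1)] .
  have img: "f ` V1 = V2" using bij_betw_imp_surj_on[OF f(1)] .
  have gb: "bij_betw g V2 V1" unfolding g_def using bij_betw_inv_into[OF f(1)] .
  have gV: "g u \<in> V1" if "u \<in> V2" for u using that img unfolding g_def by (metis inv_into_into)
  have fg: "f (g u) = u" if "u \<in> V2" for u using that img unfolding g_def by (metis f_inv_into_f)
  have "\<forall>u\<in>V2. \<forall>v\<in>V2. {u,v} \<in> E2 \<longleftrightarrow> {g u, g v} \<in> E1"
  proof (intro ballI)
    fix u v assume uv: "u \<in> V2" "v \<in> V2"
    have "{g u, g v} \<in> E1 \<longleftrightarrow> {f (g u), f (g v)} \<in> E2" using f(2) gV uv by blast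
    thus "{u,v} \<in> E2 \<longleftrightarrow> {g u, g v} \<in> E1" using fg uv by simp
  qed
  moreover have "\<forall>x\<in>X. g x = x"
  proof
    fix x assume x: "x \<in> X"
    hence "x \<in> V1" using assms(2) by auto
    hence "g (f x) = x" unfolding g_def using inj by simp
    thus "g x = x" using f(3) x by simp
  qed
  ultimately show ?thesis unfolding X_iso_def using gb by blast
qed

lemma iso_sub: assumes T1: "xtree X V1 E1" and T2: "xtree X V2 E2" and iso: "X_iso X V1 E1 V2 E2"
  shows "M_indep X V1 E1 \<subseteq> M_indep X V2 E2"
proof -
  interpret A: xtree X V1 E1 by fact
  interpret B: xtree X V2 E2 by fact
  obtain f where f: "bij_betw f V1 V2" "\<forall>u\<in>V1. \<forall>v\<in>V1. {u,v} \<in> E1 \<longleftrightarrow> {f u, f v} \<in> E2"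
    "\<forall>x\<in>X. f x = x" using iso unfolding X_iso_def by blast
  have inj: "inj_on f V1" using bij_betw_imp_inj_on[OF f(1)] .
  have img: "f ` V1 = V2" using bij_betw_imp_surj_on[OF f(1)] .
  have fe: "{u,v} \<in> E1 \<longleftrightarrow> {f u, f v} \<in> E2" if "u \<in> V1" "v \<in> V1" for u v
    using f(2) that by blast
  have pathmap: "is_path V2 E2 (map f p)" if p: "is_path V1 E1 p" for p
  proof -
    have pp: "p \<noteq> []" "distinct p" "set p \<subseteq> V1" "successively (\<lambda>x y. {x,y} \<in> E1) p"
      using p unfolding is_path_succ by auto
    have "distinct (map f p)" using pp(2,3) inj by (simp add: distinct_map inj_on_subset)
    moreover have "set (map f p) \<subseteq> V2" using pp(3) img by auto
    moreover have "successively (\<lambda>x y. {x,y} \<in> E2) (map f p)"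
      unfolding successively_map
    proof (rule successively_mono[OF pp(4)])
      fix x y assume "x \<in> set p" "y \<in> set p" "{x,y} \<in> E1"
      thus "{f x, f y} \<in> E2" using fe pp(3) by blast
    qed
    ultimately show ?thesis using pp(1) unfolding is_path_succ by simp
  qed
  have Smap: "B.S (f u) (f v) = f ` A.S u v" if uv: "u \<in> V1" "v \<in> V1" for u v
  proof -
    have ne: "A.P u v \<noteq> []" using A.P(1)[OF uv] unfolding is_path_def by simp
    have "B.P (f u) (f v) = map f (A.P u v)"
      using B.P_eqI[OF pathmap[OF A.P(1)[OF uv]]] A.P(2,3)[OF uv] ne by (simp add: hd_map last_map)
    thus ?thesis unfolding A.S_def B.S_def by simp
  qed
  have Cmap: "{e\<in>E2. e \<subseteq> B.S x y} = (image f) ` {e\<in>E1. e \<subseteq> A.S x y}" if xy: "x \<in> X" "y \<in> X" for x y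
  proof -
    have xyV: "x \<in> V1" "y \<in> V1" using xy A.XV by auto
    have SS: "B.S x y = f ` A.S x y" using Smap[OF xyV] f(3) xy by simp
    have AV: "A.S x y \<subseteq> V1" using A.S_sub[OF xyV] .
    show ?thesis
    proof
      show "{e\<in>E2. e \<subseteq> B.S x y} \<subseteq> (image f) ` {e\<in>E1. e \<subseteq> A.S x y}"
      proof
        fix e assume e: "e \<in> {e\<in>E2. e \<subseteq> B.S x y}"
        obtain s' t' where st: "e = {s',t'}" using B.edge2 e by blast
        obtain s where s: "s \<in> A.S x y" "s' = f s" using e st SS by auto
        obtain t where t: "t \<in> A.S x y" "t' = f t" using e st SS by auto
        have sV: "s \<in> V1" "t \<in> V1" using s(1) t(1) AV by auto
        have "{f s, f t} \<in> E2" using e st s t by simp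
        hence "{s,t} \<in> E1" using fe[OF sV] by simp
        moreover have "e = f ` {s,t}" using st s t by simp
        ultimately show "e \<in> (image f) ` {e\<in>E1. e \<subseteq> A.S x y}" using s t by blast
      qed
      show "(image f) ` {e\<in>E1. e \<subseteq> A.S x y} \<subseteq> {e\<in>E2. e \<subseteq> B.S x y}"
      proof
        fix e' assume "e' \<in> (image f) ` {e\<in>E1. e \<subseteq> A.S x y}"
        then obtain e where e: "e \<in> E1" "e \<subseteq> A.S x y" "e' = f ` e" by blast
        obtain s t where st: "e = {s,t}" using A.edge2 e by blast
        have sV: "s \<in> V1" "t \<in> V1" using e st AV by auto
        have "{f s, f t} \<in> E2" using fe[OF sV] e st by simp
        thus "e' \<in> {e\<in>E2. e \<subseteq> B.S x y}" using e st SS by auto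
      qed
    qed
  qed
  define g where "g = inv_into V1 f"
  have key: "lam V2 E2 c (\<lambda>e. \<omega> (g ` e)) = lam V1 E1 c \<omega>" if c: "c \<in> cords X" for c \<omega>
  proof -
    obtain x y where xy: "c = {x,y}" "x \<in> X" "y \<in> X" using c unfolding cords_def by auto
    have xyV: "x \<in> V1" "y \<in> V1" "x \<in> V2" "y \<in> V2" using xy A.XV B.XV by auto
    have injI: "inj_on (image f) {e\<in>E1. e \<subseteq> A.S x y}"
    proof (rule inj_onI)
      fix e1 e2 assume e12: "e1 \<in> {e\<in>E1. e \<subseteq> A.S x y}" "e2 \<in> {e\<in>E1. e \<subseteq> A.S x y}" "f ` e1 = f ` e2"
      have "A.S x y \<subseteq> V1" using A.S_sub[OF xyV(1,2)] .
      hence "e1 \<subseteq> V1" "e2 \<subseteq> V1" using e12 by auto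
      thus "e1 = e2" using inj_on_image_eq_iff[OF inj, of e1 e2] e12(3) by simp
    qed
    have "lam V2 E2 c (\<lambda>e. \<omega> (g ` e)) = (\<Sum>e\<in>(image f) ` {e\<in>E1. e \<subseteq> A.S x y}. \<omega> (g ` e))"
      unfolding lam_def xy(1) B.cord_edges_eq[OF xyV(3,4)] Cmap[OF xy(2,3)] ..
    also have "\<dots> = (\<Sum>e\<in>{e\<in>E1. e \<subseteq> A.S x y}. \<omega> (g ` (f ` e)))"
      by (subst sum.reindex[OF injI]) (simp add: o_def)
    also have "\<dots> = (\<Sum>e\<in>{e\<in>E1. e \<subseteq> A.S x y}. \<omega> e)"
    proof (rule sum.cong)
      fix e assume "e \<in> {e\<in>E1. e \<subseteq> A.S x y}"
      hence "e \<subseteq> V1" using A.edge by auto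
      thus "\<omega> (g ` (f ` e)) = \<omega> e" unfolding g_def using inj by simp
    qed simp
    also have "\<dots> = lam V1 E1 c \<omega>" unfolding lam_def xy(1) A.cord_edges_eq[OF xyV(1,2)] ..
    finally show ?thesis .
  qed
  show ?thesis
  proof
    fix Q assume Q: "Q \<in> M_indep X V1 E1"
    have Qc: "Q \<subseteq> cords X" "finite Q" using Q unfolding M_indep_def lin_indep_cords_def by auto
    have li: "\<And>\<alpha> :: 'a set \<Rightarrow> real. (\<forall>\<omega>. (\<Sum>c\<in>Q. \<alpha> c * lam V1 E1 c \<omega>) = 0) \<Longrightarrow> (\<forall>c\<in>Q. \<alpha> c = 0)"
      using Q unfolding M_indep_def lin_indep_cords_def by auto
    have "\<forall>\<alpha> :: 'a set \<Rightarrow> real. (\<forall>\<omega>. (\<Sum>c\<in>Q. \<alpha> c * lam V2 E2 c \<omega>) = 0) \<longrightarrow> (\<forall>c\<in>Q. \<alpha> c = 0)"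
    proof (intro allI impI)
      fix \<alpha> :: "'a set \<Rightarrow> real" assume H: "\<forall>\<omega>. (\<Sum>c\<in>Q. \<alpha> c * lam V2 E2 c \<omega>) = 0"
      have "\<forall>\<omega>. (\<Sum>c\<in>Q. \<alpha> c * lam V1 E1 c \<omega>) = 0"
      proof
        fix \<omega> :: "'a set \<Rightarrow> real"
        have "(\<Sum>c\<in>Q. \<alpha> c * lam V1 E1 c \<omega>) = (\<Sum>c\<in>Q. \<alpha> c * lam V2 E2 c (\<lambda>e. \<omega> (g ` e)))"
          using key Qc(1) by (intro sum.cong) auto
        also have "\<dots> = 0" using H by blast
        finally show "(\<Sum>c\<in>Q. \<alpha> c * lam V1 E1 c \<omega>) = 0" .
      qed
      thus "\<forall>c\<in>Q. \<alpha> c = 0" using li by blast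
    qed
    thus "Q \<in> M_indep X V2 E2" unfolding M_indep_def lin_indep_cords_def using Qc by auto
  qed
qed

lemma sep_corr: assumes T1: "xtree X V1 E1" and T2: "xtree X V2 E2"
  and M: "M_indep X V1 E1 = M_indep X V2 E2" and v: "v \<in> V1"
  shows "\<exists>w\<in>V2. xtree.Sep X V2 E2 w = xtree.Sep X V1 E1 v"
proof -
  interpret A: xtree X V1 E1 by fact
  interpret B: xtree X V2 E2 by fact
  have EDeq: "A.ED a b c d \<longleftrightarrow> B.ED a b c d"
    if "a \<in> X" "b \<in> X" "c \<in> X" "d \<in> X" "distinct [a,b,c,d]" for a b c d
  proof -
    have "{{a,c},{b,d},{a,d},{b,c}} \<in> M_indep X V1 E1 \<longleftrightarrow> {{a,c},{b,d},{a,d},{b,c}} \<in> M_indep X V2 E2"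
      using M by simp
    thus ?thesis using A.quartet[OF that] B.quartet[OF that] by blast
  qed
  have phieq: "phi A.ED x y z a b \<longleftrightarrow> phi B.ED x y z a b"
    if xyz: "x \<in> X" "y \<in> X" "z \<in> X" "a \<in> X" "b \<in> X" for x y z a b
  proof -
    have "(p \<in> {x,y,z} \<and> q \<in> {x,y,z} \<and> p \<noteq> q \<and> distinct [a,b,p,q] \<and> A.ED a b p q \<and> \<not> A.ED a p b q)
      \<longleftrightarrow> (p \<in> {x,y,z} \<and> q \<in> {x,y,z} \<and> p \<noteq> q \<and> distinct [a,b,p,q] \<and> B.ED a b p q \<and> \<not> B.ED a p b q)"
      for p q
    proof (cases "p \<in> {x,y,z} \<and> q \<in> {x,y,z} \<and> distinct [a,b,p,q]")
      case True
      hence X4: "p \<in> X" "q \<in> X" using xyz by auto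
      have d1: "distinct [a,b,p,q]" using True by simp
      hence d2: "distinct [a,p,b,q]" by auto
      show ?thesis using EDeq[OF xyz(4,5) X4 d1] EDeq[OF xyz(4) X4(1) xyz(5) X4(2) d2] by blast
    qed blast
    thus ?thesis unfolding phi_def by simp
  qed
  show ?thesis
  proof (cases "v \<in> X")
    case True
    hence "v \<in> V2" using B.XV by auto
    moreover have "B.Sep v = A.Sep v" using A.sep_leaf[OF True] B.sep_leaf[OF True] by simp
    ultimately show ?thesis by blast
  next
    case False
    obtain x y z where xyz: "x \<in> X" "y \<in> X" "z \<in> X" "x \<noteq> y" "x \<noteq> z" "y \<noteq> z"
      "v \<in> A.S x y" "v \<in> A.S y z" "v \<in> A.S x z" using A.internal_triple[OF v False] by blast
    have V2': "x \<in> V2" "y \<in> V2" "z \<in> V2" using xyz B.XV by auto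
    obtain m where m: "m \<in> B.S x y" "m \<in> B.S y z" "m \<in> B.S x z" using B.median[OF V2'] by blast
    have mV: "m \<in> V2" using m(1) B.S_sub[OF V2'(1,2)] by blast
    have "B.Sep m = {(a,b). a \<in> X \<and> b \<in> X \<and> a \<noteq> b \<and> \<not> phi B.ED x y z a b}"
      using B.sep_median[OF xyz(1-6) m] .
    also have "\<dots> = {(a,b). a \<in> X \<and> b \<in> X \<and> a \<noteq> b \<and> \<not> phi A.ED x y z a b}"
    proof (rule set_eqI)
      fix pr :: "'a \<times> 'a"
      obtain a b where pr: "pr = (a,b)" by (cases pr)
      show "pr \<in> {(a,b). a \<in> X \<and> b \<in> X \<and> a \<noteq> b \<and> \<not> phi B.ED x y z a b} \<longleftrightarrow>
            pr \<in> {(a,b). a \<in> X \<and> b \<in> X \<and> a \<noteq> b \<and> \<not> phi A.ED x y z a b}"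
        unfolding pr using phieq[OF xyz(1-3), of a b] by auto
    qed
    also have "\<dots> = A.Sep v" using A.sep_median[OF xyz] by simp
    finally show ?thesis using mV by blast
  qed
qed

lemma M_iso: assumes T1: "xtree X V1 E1" and T2: "xtree X V2 E2"
  and M: "M_indep X V1 E1 = M_indep X V2 E2"
  shows "X_iso X V1 E1 V2 E2"
proof -
  interpret A: xtree X V1 E1 by fact
  interpret B: xtree X V2 E2 by fact
  define f where "f v = (SOME w. w \<in> V2 \<and> B.Sep w = A.Sep v)" for v
  have fv: "f v \<in> V2 \<and> B.Sep (f v) = A.Sep v" if "v \<in> V1" for v
  proof -
    have "\<exists>w. w \<in> V2 \<and> B.Sep w = A.Sep v" using sep_corr[OF T1 T2 M that] by blast
    thus ?thesis unfolding f_def by (rule someI_ex)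
  qed
  have inj: "inj_on f V1"
  proof (rule inj_onI)
    fix u v assume uv: "u \<in> V1" "v \<in> V1" "f u = f v"
    hence "A.Sep u = A.Sep v" using fv by metis
    thus "u = v" using A.sep_inj uv(1,2) by blast
  qed
  have img: "f ` V1 = V2"
  proof
    show "f ` V1 \<subseteq> V2" using fv by blast
    show "V2 \<subseteq> f ` V1"
    proof
      fix w assume w: "w \<in> V2"
      obtain v where v: "v \<in> V1" "A.Sep v = B.Sep w" using sep_corr[OF T2 T1 M[symmetric] w] by blast
      have "B.Sep (f v) = B.Sep w" using fv[OF v(1)] v(2) by simp
      hence "f v = w" using B.sep_inj fv[OF v(1)] w by blast
      thus "w \<in> f ` V1" using v(1) by blast
    qed
  qed
  have edges: "{u,v} \<in> E1 \<longleftrightarrow> {f u, f v} \<in> E2" if uv: "u \<in> V1" "v \<in> V1" for u v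
  proof -
    have fuv: "f u \<in> V2" "f v \<in> V2" using fv uv by auto
    have allV: "(\<forall>w'\<in>V2. Q w') \<longleftrightarrow> (\<forall>w\<in>V1. Q (f w))" for Q using img by blast
    have eqf: "f w = f u \<longleftrightarrow> w = u" "f w = f v \<longleftrightarrow> w = v" if "w \<in> V1" for w
      using inj uv that by (auto dest: inj_onD)
    have "{f u, f v} \<in> E2 \<longleftrightarrow> f u \<noteq> f v \<and>
        (\<forall>w'\<in>V2. B.Sep (f u) \<inter> B.Sep (f v) \<subseteq> B.Sep w' \<longrightarrow> w' = f u \<or> w' = f v)"
      using B.adj_char[OF fuv] .
    also have "\<dots> \<longleftrightarrow> f u \<noteq> f v \<and>
        (\<forall>w\<in>V1. B.Sep (f u) \<inter> B.Sep (f v) \<subseteq> B.Sep (f w) \<longrightarrow> f w = f u \<or> f w = f v)"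
      using allV by simp
    also have "\<dots> \<longleftrightarrow> u \<noteq> v \<and> (\<forall>w\<in>V1. A.Sep u \<inter> A.Sep v \<subseteq> A.Sep w \<longrightarrow> w = u \<or> w = v)"
      using fv uv eqf eqf[OF uv(1)] by auto
    also have "\<dots> \<longleftrightarrow> {u,v} \<in> E1" using A.adj_char[OF uv] by simp
    finally show ?thesis by simp
  qed
  have fixX: "f x = x" if x: "x \<in> X" for x
  proof -
    have xV: "x \<in> V1" "x \<in> V2" using x A.XV B.XV by auto
    have "B.Sep (f x) = B.Sep x" using fv[OF xV(1)] A.sep_leaf[OF x] B.sep_leaf[OF x] by simp
    thus ?thesis using B.sep_inj fv[OF xV(1)] xV(2) by blast
  qed
  show ?thesis unfolding X_iso_def bij_betw_def using inj img edges fixX by blast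
qed

theorem mainTheorem8:
  fixes X V1 V2 :: "'v set" and E1 E2 :: "'v set set"
  assumes "finite X" and "card X \<ge> 3"
    and "is_X_tree X V1 E1" and "is_X_tree X V2 E2"
  shows "M_indep X V1 E1 = M_indep X V2 E2 \<longleftrightarrow> X_iso X V1 E1 V2 E2"
proof -
  have T1: "xtree X V1 E1" using assms by (simp add: xtree_def)
  have T2: "xtree X V2 E2" using assms by (simp add: xtree_def)
  show ?thesis
  proof
    assume "M_indep X V1 E1 = M_indep X V2 E2"
    thus "X_iso X V1 E1 V2 E2" using M_iso[OF T1 T2] by blast
  next
    assume iso: "X_iso X V1 E1 V2 E2"
    have "X \<subseteq> V1" using xtree.XV[OF T1] .
    hence iso': "X_iso X V2 E2 V1 E1" using iso_sym[OF iso] by blast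
    show "M_indep X V1 E1 = M_indep X V2 E2"
      using iso_sub[OF T1 T2 iso] iso_sub[OF T2 T1 iso'] by blast
  qed
qed

end
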